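(* Let $(p_1,\alpha^1,\beta^1)$ and $(p_2,\alpha^2,\beta^2)$ be two equilibria with demand maps $D_1,D_2$. For $\mu$-almost every $x$ the following holds: if $D_1(x)=\{d_1(x)\}$ is a singleton, then $d_1(x)\in D_2(x)$; and if moreover $D_2(x)=\{d_2(x)\}$ is a singleton, then $d_1(x)=d_2(x)$.
   Context: Standing setting. $X\subset\mathbb R^{d_1}$, $Y\subset\mathbb R^{d_2}$, $Z_0\subset\mathbb R^{d_3}$ compact; $\mu,\nu$ finite nonnegative Borel measures on $X,Y$. $u$ continuous on a neighbourhood of $X\times Z_0$, differentiable in $x$ with $D_xu$ continuous; $v$ continuous on a neighbourhood of $Y\times Z_0$, differentiable in $y$ with $D_yv$ continuous. $Z=Z_0\cup\{\varnothing_d\}\cup\{\varnothing_s\}$ with two distinct isolated extra points; $u(x,\varnothing_d)=0$, $u(x,\varnothing_s)=-1$, $v(y,\varnothing_s)=0$, $v(y,\varnothing_d)=1$. $b(z)=\max_x u(x,z)$, $a(z)=\min_y v(y,z)$, $Z_1=\{z\in Z:a(z)\le b(z)\}$. A price system is a continuous $p:Z\to\mathbb R$ with $p(\varnothing_d)=p(\varnothing_s)=0$, admissible if $a\le p\le b$ on $Z_1$. $D(x)=\arg\max_{z\in Z}\{u(x,z)-p(z)\}$, $S(y)=\arg\min_{z\in Z}\{v(y,z)-p(z)\}$. A demand (resp. supply) distribution associated with $p$ is a positive Borel measure on $X\times Z$ (resp. $Y\times Z$) carried by the graph of $D$ (resp. $S$) with $X$-marginal $\mu$ (resp. $Y$-marginal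 $\nu$). An equilibrium is $(p,\alpha,\beta)$ with $p$ admissible, $\alpha,\beta$ associated demand and supply distributions, and equal $Z$-marginals on Borel subsets of $Z_0$. $D_i$ is the demand map for $p_i$. *)

theory Defs
  imports "HOL-Analysis.Analysis" "HOL-Probability.Probability"
begin

text \<open>The set of goods Z = Z0 together with two distinct extra points
  NullD (the "no purchase" point) and NullS (the "no sale" point).\<close>
datatype 'c ext = Good 'c | NullD | NullS

definition Zset :: "'c set \<Rightarrow> 'c ext set" where
  "Zset Z0 = Good ` Z0 \<union> {NullD, NullS}"

definition Zmeas :: "('c::topological_space) ext measure" where
  "Zmeas = sigma UNIV {S. Good -` S \<in> sets borel}"

definition uZ :: "('a \<Rightarrow> 'c \<Rightarrow> real) \<Rightarrow> 'a \<Rightarrow> 'c ext \<Rightarrow> real" where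
  "uZ u x z = (case z of Good c \<Rightarrow> u x c | NullD \<Rightarrow> 0 | NullS \<Rightarrow> -1)"

definition vZ :: "('b \<Rightarrow> 'c \<Rightarrow> real) \<Rightarrow> 'b \<Rightarrow> 'c ext \<Rightarrow> real" where
  "vZ v y z = (case z of Good c \<Rightarrow> v y c | NullS \<Rightarrow> 0 | NullD \<Rightarrow> 1)"

definition bfun :: "'a set \<Rightarrow> ('a \<Rightarrow> 'c \<Rightarrow> real) \<Rightarrow> 'c ext \<Rightarrow> real" where
  "bfun X u z = (SUP x\<in>X. uZ u x z)"

definition afun :: "'b set \<Rightarrow> ('b \<Rightarrow> 'c \<Rightarrow> real) \<Rightarrow> 'c ext \<Rightarrow> real" where
  "afun Y v z = (INF y\<in>Y. vZ v y z)"

definition Z1 :: "'a set \<Rightarrow> 'b set \<Rightarrow> 'c set \<Rightarrow> ('a \<Rightarrow> 'c \<Rightarrow> real) \<Rightarrow> ('b \<Rightarrow> 'c \<Rightarrow> real) \<Rightarrow> 'c ext set" where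
  "Z1 X Y Z0 u v = {z \<in> Zset Z0. afun Y v z \<le> bfun X u z}"

definition price_system :: "('c::topological_space) set \<Rightarrow> ('c ext \<Rightarrow> real) \<Rightarrow> bool" where
  "price_system Z0 p \<longleftrightarrow> continuous_on Z0 (p \<circ> Good) \<and> p NullD = 0 \<and> p NullS = 0"

definition admissible ::
  "'a set \<Rightarrow> 'b set \<Rightarrow> ('c::topological_space) set \<Rightarrow> ('a \<Rightarrow> 'c \<Rightarrow> real) \<Rightarrow> ('b \<Rightarrow> 'c \<Rightarrow> real)
    \<Rightarrow> ('c ext \<Rightarrow> real) \<Rightarrow> bool" where
  "admissible X Y Z0 u v p \<longleftrightarrow> price_system Z0 p \<and>
     (\<forall>z \<in> Z1 X Y Z0 u v. afun Y v z \<le> p z \<and> p z \<le> bfun X u z)"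

definition demand_map :: "'c set \<Rightarrow> ('a \<Rightarrow> 'c \<Rightarrow> real) \<Rightarrow> ('c ext \<Rightarrow> real) \<Rightarrow> 'a \<Rightarrow> 'c ext set" where
  "demand_map Z0 u p x = {z \<in> Zset Z0. \<forall>z' \<in> Zset Z0. uZ u x z' - p z' \<le> uZ u x z - p z}"

definition supply_map :: "'c set \<Rightarrow> ('b \<Rightarrow> 'c \<Rightarrow> real) \<Rightarrow> ('c ext \<Rightarrow> real) \<Rightarrow> 'b \<Rightarrow> 'c ext set" where
  "supply_map Z0 v p y = {z \<in> Zset Z0. \<forall>z' \<in> Zset Z0. vZ v y z - p z \<le> vZ v y z' - p z'}"

definition demand_dist ::
  "'a::euclidean_space set \<Rightarrow> 'c::euclidean_space set \<Rightarrow> 'a measure \<Rightarrow> ('a \<Rightarrow> 'c \<Rightarrow> real)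
    \<Rightarrow> ('c ext \<Rightarrow> real) \<Rightarrow> ('a \<times> 'c ext) measure \<Rightarrow> bool" where
  "demand_dist X Z0 \<mu> u p \<alpha> \<longleftrightarrow>
     sets \<alpha> = sets (borel \<Otimes>\<^sub>M Zmeas) \<and>
     (AE xz in \<alpha>. fst xz \<in> X \<and> snd xz \<in> demand_map Z0 u p (fst xz)) \<and>
     distr \<alpha> borel fst = \<mu>"

definition supply_dist ::
  "'b::euclidean_space set \<Rightarrow> 'c::euclidean_space set \<Rightarrow> 'b measure \<Rightarrow> ('b \<Rightarrow> 'c \<Rightarrow> real)
    \<Rightarrow> ('c ext \<Rightarrow> real) \<Rightarrow> ('b \<times> 'c ext) measure \<Rightarrow> bool" where
  "supply_dist Y Z0 \<nu> v p \<beta> \<longleftrightarrow>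
     sets \<beta> = sets (borel \<Otimes>\<^sub>M Zmeas) \<and>
     (AE yz in \<beta>. fst yz \<in> Y \<and> snd yz \<in> supply_map Z0 v p (fst yz)) \<and>
     distr \<beta> borel fst = \<nu>"

definition equilibrium ::
  "'a::euclidean_space set \<Rightarrow> 'b::euclidean_space set \<Rightarrow> 'c::euclidean_space set
    \<Rightarrow> 'a measure \<Rightarrow> 'b measure \<Rightarrow> ('a \<Rightarrow> 'c \<Rightarrow> real) \<Rightarrow> ('b \<Rightarrow> 'c \<Rightarrow> real)
    \<Rightarrow> ('c ext \<Rightarrow> real) \<Rightarrow> ('a \<times> 'c ext) measure \<Rightarrow> ('b \<times> 'c ext) measure \<Rightarrow> bool" where
  "equilibrium X Y Z0 \<mu> \<nu> u v p \<alpha> \<beta> \<longleftrightarrow>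
     admissible X Y Z0 u v p \<and>
     demand_dist X Z0 \<mu> u p \<alpha> \<and>
     supply_dist Y Z0 \<nu> v p \<beta> \<and>
     (\<forall>B \<in> sets borel. B \<subseteq> Z0 \<longrightarrow>
        emeasure \<alpha> (UNIV \<times> Good ` B) = emeasure \<beta> (UNIV \<times> Good ` B))"

definition regular_util :: "'a::euclidean_space set \<Rightarrow> 'c::euclidean_space set \<Rightarrow> ('a \<Rightarrow> 'c \<Rightarrow> real) \<Rightarrow> bool" where
  "regular_util S Z0 f \<longleftrightarrow> (\<exists>U. open U \<and> S \<times> Z0 \<subseteq> U \<and> continuous_on U (\<lambda>(x,z). f x z) \<and>
     (\<exists>Df :: 'a \<times> 'c \<Rightarrow> 'a \<Rightarrow>\<^sub>L real.
        (\<forall>(x,z) \<in> U. ((\<lambda>x'. f x' z) has_derivative blinfun_apply (Df (x,z))) (at x)) \<and>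
        continuous_on U Df))"

end

theory Submission
  imports Defs
begin

lemma space_Zmeas[simp]: "space Zmeas = UNIV"
  unfolding Zmeas_def by (simp add: space_measure_of_conv)

lemma Zmeas_setsI: "Good -` S \<in> sets borel \<Longrightarrow> S \<in> sets Zmeas"
  unfolding Zmeas_def by (rule in_measure_of) auto

lemma Zmeas_measurableI:
  assumes "(\<lambda>c. h (Good c)) \<in> measurable borel (borel :: 'b::topological_space measure)"
  shows "h \<in> measurable Zmeas (borel :: 'b measure)"
proof (rule measurableI)
  fix A :: "'b set" assume "A \<in> sets borel"
  then have "(\<lambda>c. h (Good c)) -` A \<inter> space borel \<in> sets borel"
    using assms measurable_sets by blast
  then show "h -` A \<inter> space Zmeas \<in> sets Zmeas"
    by (intro Zmeas_setsI) (simp add: vimage_def)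
qed simp

lemma Good_measurable: "Good \<in> measurable (borel :: 'c::topological_space measure) Zmeas"
  unfolding Zmeas_def
  by (rule measurable_measure_of) auto

definition the_good :: "'c::euclidean_space ext \<Rightarrow> 'c" where
  "the_good z = (case z of Good c \<Rightarrow> c | _ \<Rightarrow> 0)"

lemma the_good_measurable: "the_good \<in> measurable Zmeas (borel :: 'c::euclidean_space measure)"
  by (rule Zmeas_measurableI) (simp add: the_good_def)

lemma NullD_sets: "{NullD} \<in> sets (Zmeas :: 'c::euclidean_space ext measure)"
  and NullS_sets: "{NullS} \<in> sets (Zmeas :: 'c::euclidean_space ext measure)"
proof -
  have "Good -` {NullD} = ({} :: 'c set)" "Good -` {NullS} = ({} :: 'c set)" by auto
  then show "{NullD} \<in> sets (Zmeas :: 'c::euclidean_space ext measure)"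
    "{NullS} \<in> sets (Zmeas :: 'c::euclidean_space ext measure)" by (auto intro!: Zmeas_setsI)
qed

lemma Zset_simps: "Good c \<in> Zset Z0 \<longleftrightarrow> c \<in> Z0" "NullD \<in> Zset Z0" "NullS \<in> Zset Z0"
  by (auto simp: Zset_def)

definition good_fun :: "'a::euclidean_space set \<Rightarrow> 'c::euclidean_space set \<Rightarrow> ('a \<Rightarrow> 'c ext \<Rightarrow> real) \<Rightarrow> bool" where
  "good_fun X Z0 f \<longleftrightarrow> continuous_on (X \<times> Z0) (\<lambda>w. f (fst w) (Good (snd w))) \<and>
     continuous_on X (\<lambda>x. f x NullD) \<and> continuous_on X (\<lambda>x. f x NullS)"

definition cut :: "'a set \<Rightarrow> 'c set \<Rightarrow> ('a \<Rightarrow> 'c ext \<Rightarrow> real) \<Rightarrow> 'a \<times> 'c ext \<Rightarrow> real" where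
  "cut X Z0 f w = (if fst w \<in> X \<and> snd w \<in> Zset Z0 then f (fst w) (snd w) else 0)"

lemma cut_measurable:
  fixes X :: "'a::euclidean_space set" and Z0 :: "'c::euclidean_space set"
  assumes g: "good_fun X Z0 f" and X: "closed X" and Z: "closed Z0"
  shows "cut X Z0 f \<in> borel_measurable (borel \<Otimes>\<^sub>M Zmeas)"
proof -
  define gG where "gG = (\<lambda>w. indicator (X \<times> Z0) w *\<^sub>R f (fst w) (Good (snd w)))"
  define gD where "gD = (\<lambda>x. indicator X x *\<^sub>R f x NullD)"
  define gS where "gS = (\<lambda>x. indicator X x *\<^sub>R f x NullS)"
  have mG: "gG \<in> borel_measurable (borel \<Otimes>\<^sub>M borel)"
    unfolding gG_def borel_prod using g X Z
    by (intro borel_measurable_continuous_on_indicator) (auto simp: good_fun_def closed_Times)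
  have mD: "gD \<in> borel_measurable borel"
    unfolding gD_def using g X by (intro borel_measurable_continuous_on_indicator) (auto simp: good_fun_def)
  have mS: "gS \<in> borel_measurable borel"
    unfolding gS_def using g X by (intro borel_measurable_continuous_on_indicator) (auto simp: good_fun_def)
  have eq: "cut X Z0 f = (\<lambda>w. if snd w = NullD then gD (fst w) else if snd w = NullS then gS (fst w)
      else gG (fst w, the_good (snd w)))"
  proof
    fix w :: "'a \<times> 'c ext"
    obtain x z where w: "w = (x, z)" by fastforce
    show "cut X Z0 f w = (if snd w = NullD then gD (fst w) else if snd w = NullS then gS (fst w)
      else gG (fst w, the_good (snd w)))"
      by (cases z) (auto simp: w cut_def gD_def gS_def gG_def the_good_def Zset_simps indicator_def)
  qed
  have s1: "{w \<in> space ((borel::'a measure) \<Otimes>\<^sub>M (Zmeas::'c ext measure)). snd w = NullD} \<in> sets ((borel::'a measure) \<Otimes>\<^sub>M (Zmeas::'c ext measure))"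
  proof -
    have "{w \<in> space ((borel::'a measure) \<Otimes>\<^sub>M (Zmeas::'c ext measure)). snd w = NullD} = snd -` {NullD} \<inter> space (borel \<Otimes>\<^sub>M (Zmeas :: 'c ext measure))" by auto
    also have "\<dots> \<in> sets (borel \<Otimes>\<^sub>M Zmeas)" by (rule measurable_sets[OF measurable_snd NullD_sets])
    finally show ?thesis .
  qed
  have s2: "{w \<in> space ((borel::'a measure) \<Otimes>\<^sub>M (Zmeas::'c ext measure)). snd w = NullS} \<in> sets ((borel::'a measure) \<Otimes>\<^sub>M (Zmeas::'c ext measure))"
  proof -
    have "{w \<in> space ((borel::'a measure) \<Otimes>\<^sub>M (Zmeas::'c ext measure)). snd w = NullS} = snd -` {NullS} \<inter> space (borel \<Otimes>\<^sub>M (Zmeas :: 'c ext measure))" by auto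
    also have "\<dots> \<in> sets (borel \<Otimes>\<^sub>M Zmeas)" by (rule measurable_sets[OF measurable_snd NullS_sets])
    finally show ?thesis .
  qed
  have m1: "(\<lambda>w. gD (fst w)) \<in> borel_measurable (borel \<Otimes>\<^sub>M Zmeas)"
    using mD by measurable
  have m2: "(\<lambda>w. gS (fst w)) \<in> borel_measurable (borel \<Otimes>\<^sub>M Zmeas)"
    using mS by measurable
  have m3: "(\<lambda>w. gG (fst w, the_good (snd w))) \<in> borel_measurable (borel \<Otimes>\<^sub>M Zmeas)"
    using mG the_good_measurable by measurable
  show ?thesis unfolding eq
    by (intro measurable_If m1 m2 m3 s1 s2)
qed


lemma good_cont:
  assumes g: "good_fun X Z0 f" and z: "z \<in> Zset Z0"
  shows "continuous_on X (\<lambda>x. f x z)"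
proof -
  consider c where "z = Good c" "c \<in> Z0" | "z = NullD" | "z = NullS"
    using z by (cases z) (auto simp: Zset_simps)
  then show ?thesis
  proof cases
    case 1
    have "continuous_on X (\<lambda>x. (\<lambda>w. f (fst w) (Good (snd w))) ((\<lambda>x. (x, c)) x))"
    proof (rule continuous_on_compose2[of "X \<times> Z0"])
      show "continuous_on (X \<times> Z0) (\<lambda>w. f (fst w) (Good (snd w)))" using g by (simp add: good_fun_def)
      show "continuous_on X (\<lambda>x. (x, c))" by (intro continuous_on_Pair continuous_on_id continuous_on_const)
      show "(\<lambda>x. (x, c)) ` X \<subseteq> X \<times> Z0" using 1 by auto
    qed
    then show ?thesis using 1 by simp
  qed (use g in \<open>auto simp: good_fun_def\<close>)
qed

lemma good_cont2:
  assumes g: "good_fun X Z0 f" and z: "z \<in> Zset Z0"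
  shows "continuous_on (X \<times> Z0) (\<lambda>w. f (fst w) z)"
proof (rule continuous_on_compose2[of X "\<lambda>x. f x z" "X \<times> Z0" fst])
  show "continuous_on X (\<lambda>x. f x z)" by (rule good_cont[OF g z])
  show "continuous_on (X \<times> Z0) fst" by (intro continuous_on_fst continuous_on_id)
  show "fst ` (X \<times> Z0) \<subseteq> X" by auto
qed

lemma good_bounded:
  assumes g: "good_fun X Z0 f" and X: "compact X" and Z: "compact Z0"
  shows "\<exists>B. \<forall>x\<in>X. \<forall>z\<in>Zset Z0. \<bar>f x z\<bar> \<le> B"
proof -
  have "compact ((\<lambda>w. f (fst w) (Good (snd w))) ` (X \<times> Z0))"
    using g X Z by (intro compact_continuous_image) (auto simp: good_fun_def compact_Times)
  moreover have "compact ((\<lambda>x. f x NullD) ` X)" "compact ((\<lambda>x. f x NullS) ` X)"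
    using g X by (auto intro!: compact_continuous_image simp: good_fun_def)
  ultimately have "bounded ((\<lambda>w. f (fst w) (Good (snd w))) ` (X \<times> Z0) \<union> (\<lambda>x. f x NullD) ` X \<union> (\<lambda>x. f x NullS) ` X)"
    by (intro bounded_Un compact_imp_bounded conjI) auto
  then obtain B where B: "\<forall>y\<in>(\<lambda>w. f (fst w) (Good (snd w))) ` (X \<times> Z0) \<union> (\<lambda>x. f x NullD) ` X \<union> (\<lambda>x. f x NullS) ` X. \<bar>y\<bar> \<le> B"
    unfolding bounded_real by blast
  have "\<forall>x\<in>X. \<forall>z\<in>Zset Z0. \<bar>f x z\<bar> \<le> B"
  proof (intro ballI)
    fix x z assume x: "x \<in> X" and z: "z \<in> Zset Z0"
    then show "\<bar>f x z\<bar> \<le> B"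
    proof (cases z)
      case (Good c)
      then have "c \<in> Z0" using z by (simp add: Zset_simps)
      then have "f x z \<in> (\<lambda>w. f (fst w) (Good (snd w))) ` (X \<times> Z0)"
        using x Good by (auto intro!: image_eqI[of _ _ "(x,c)"])
      then show ?thesis using B by blast
    qed (use B x in auto)
  qed
  then show ?thesis by blast
qed

lemma good_fun_diff:
  "good_fun X Z0 f \<Longrightarrow> good_fun X Z0 g \<Longrightarrow> good_fun X Z0 (\<lambda>x z. f x z - g x z)"
  unfolding good_fun_def by (auto intro!: continuous_intros)

lemma cut_diff: "cut X Z0 (\<lambda>x z. f x z - g x z) w = cut X Z0 f w - cut X Z0 g w"
  by (simp add: cut_def)

lemma closed_forall:
  assumes S: "closed S" and c: "\<And>k. k \<in> K \<Longrightarrow> continuous_on S (g k)"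
  shows "closed {x\<in>S. \<forall>k\<in>K. g k x \<le> (0::real)}"
proof -
  have "{x\<in>S. \<forall>k\<in>K. g k x \<le> 0} = S \<inter> (\<Inter>k\<in>K. S \<inter> g k -` {..0})" by auto
  also have "closed \<dots>"
    using S c by (intro closed_Int closed_INT ballI continuous_closed_preimage[OF _ S closed_atMost]) auto
  finally show ?thesis .
qed

definition Fmax :: "'a set \<Rightarrow> 'c set \<Rightarrow> ('a \<Rightarrow> 'c ext \<Rightarrow> real) \<Rightarrow> 'a \<Rightarrow> real" where
  "Fmax X Z0 f x = (if x \<in> X then Sup (f x ` Zset Z0) else 0)"

lemma Fmax_props:
  assumes B: "\<forall>x\<in>X. \<forall>z\<in>Zset Z0. \<bar>f x z\<bar> \<le> B"
  shows "\<And>x z. x \<in> X \<Longrightarrow> z \<in> Zset Z0 \<Longrightarrow> f x z \<le> Fmax X Z0 f x"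
    and "\<And>x. \<bar>Fmax X Z0 f x\<bar> \<le> \<bar>B\<bar>"
    and "\<And>x z. x \<in> X \<Longrightarrow> z \<in> Zset Z0 \<Longrightarrow> (f x z = Fmax X Z0 f x \<longleftrightarrow> (\<forall>z'\<in>Zset Z0. f x z' \<le> f x z))"
    and "\<And>x a. x \<in> X \<Longrightarrow> Fmax X Z0 f x \<le> a \<longleftrightarrow> (\<forall>z\<in>Zset Z0. f x z \<le> a)"
proof -
  have ne: "Zset Z0 \<noteq> {}" by (auto simp: Zset_def)
  have bdd: "bdd_above (f x ` Zset Z0)" if "x \<in> X" for x
    using B that by (intro bdd_aboveI[of _ B]) force
  show ge: "f x z \<le> Fmax X Z0 f x" if "x \<in> X" "z \<in> Zset Z0" for x z
    using that bdd[OF that(1)] by (simp add: Fmax_def cSUP_upper)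
  show le: "Fmax X Z0 f x \<le> a \<longleftrightarrow> (\<forall>z\<in>Zset Z0. f x z \<le> a)" if "x \<in> X" for x a
    using that bdd[OF that] ne by (simp add: Fmax_def cSUP_le_iff)
  show "\<bar>Fmax X Z0 f x\<bar> \<le> \<bar>B\<bar>" for x
  proof (cases "x \<in> X")
    case True
    have "Fmax X Z0 f x \<le> B" using le[OF True] B True by (meson abs_le_D1)
    moreover have "f x NullD \<le> Fmax X Z0 f x" using ge[OF True] by (simp add: Zset_simps)
    moreover have "-B \<le> f x NullD" using B True Zset_simps(2) by force
    ultimately show ?thesis by auto
  next
    case False
    then show ?thesis by (simp add: Fmax_def)
  qed
  show "f x z = Fmax X Z0 f x \<longleftrightarrow> (\<forall>z'\<in>Zset Z0. f x z' \<le> f x z)" if "x \<in> X" "z \<in> Zset Z0" for x z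
    using ge[OF that(1)] le[OF that(1), of "f x z"] that by (metis order_antisym)
qed


lemma Fmax_measurable:
  assumes g: "good_fun X Z0 f" and X: "compact X" and Z: "compact Z0"
  shows "Fmax X Z0 f \<in> borel_measurable borel"
proof -
  obtain B where B: "\<forall>x\<in>X. \<forall>z\<in>Zset Z0. \<bar>f x z\<bar> \<le> B" using good_bounded[OF g X Z] by blast
  show ?thesis unfolding borel_measurable_iff_le
  proof
    fix a
    have eq: "{w \<in> space borel. Fmax X Z0 f w \<le> a} = {x\<in>X. \<forall>z\<in>Zset Z0. f x z - a \<le> 0} \<union> {x. x \<notin> X \<and> 0 \<le> a}"
      using Fmax_props(4)[OF B] by (auto simp: Fmax_def)
    have "closed {x\<in>X. \<forall>z\<in>Zset Z0. f x z - a \<le> 0}"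
      using X good_cont[OF g] by (intro closed_forall compact_imp_closed) (auto intro!: continuous_intros)
    moreover have "{x. x \<notin> X \<and> 0 \<le> a} \<in> sets borel"
    proof (cases "0 \<le> a")
      case True
      then have "{x. x \<notin> X \<and> 0 \<le> a} = - X" by auto
      then show ?thesis using X by (simp add: borel_open compact_imp_closed open_Compl)
    qed simp
    ultimately show "{w \<in> space borel. Fmax X Z0 f w \<le> a} \<in> sets borel"
      unfolding eq by (rule sets.Un[OF borel_closed])
  qed
qed

lemma E_closed:
  assumes g1: "good_fun X Z0 f1" and g2: "good_fun X Z0 f2" and X: "compact X" and Z: "compact Z0"
  shows "closed {x\<in>X. \<exists>z\<in>Zset Z0. (\<forall>z'\<in>Zset Z0. f1 x z' \<le> f1 x z) \<and> (\<forall>z'\<in>Zset Z0. f2 x z' \<le> f2 x z)}"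
proof -
  define P where "P = (\<lambda>x z. (\<forall>z'\<in>Zset Z0. f1 x z' - f1 x z \<le> 0) \<and> (\<forall>z'\<in>Zset Z0. f2 x z' - f2 x z \<le> 0))"
  define CG where "CG = {w\<in>X\<times>Z0. \<forall>z'\<in>Zset Z0. f1 (fst w) z' - f1 (fst w) (Good (snd w)) \<le> 0} \<inter>
     {w\<in>X\<times>Z0. \<forall>z'\<in>Zset Z0. f2 (fst w) z' - f2 (fst w) (Good (snd w)) \<le> 0}"
  have cX: "closed X" "closed Z0" using X Z by (auto intro: compact_imp_closed)
  have "closed CG" unfolding CG_def
    using g1 g2 cX good_cont2[OF g1] good_cont2[OF g2]
    by (intro closed_Int closed_forall closed_Times) (auto simp: good_fun_def intro!: continuous_intros)
  moreover have "CG \<subseteq> X \<times> Z0" by (auto simp: CG_def)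
  ultimately have "compact CG" using X Z
    by (metis compact_Int_closed compact_Times inf.absorb_iff2)
  then have c1: "closed (fst ` CG)"
    by (intro compact_imp_closed compact_continuous_image continuous_on_fst continuous_on_id)
  have c2: "closed {x\<in>X. \<forall>z'\<in>Zset Z0. f1 x z' - f1 x zz \<le> 0}" "closed {x\<in>X. \<forall>z'\<in>Zset Z0. f2 x z' - f2 x zz \<le> 0}"
    if "zz \<in> Zset Z0" for zz
    using cX good_cont[OF g1] good_cont[OF g2] that
    by (intro closed_forall; auto intro!: continuous_intros)+
  have eq: "{x\<in>X. \<exists>z\<in>Zset Z0. (\<forall>z'\<in>Zset Z0. f1 x z' \<le> f1 x z) \<and> (\<forall>z'\<in>Zset Z0. f2 x z' \<le> f2 x z)}
    = ({x\<in>X. \<forall>z'\<in>Zset Z0. f1 x z' - f1 x NullD \<le> 0} \<inter> {x\<in>X. \<forall>z'\<in>Zset Z0. f2 x z' - f2 x NullD \<le> 0})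
    \<union> ({x\<in>X. \<forall>z'\<in>Zset Z0. f1 x z' - f1 x NullS \<le> 0} \<inter> {x\<in>X. \<forall>z'\<in>Zset Z0. f2 x z' - f2 x NullS \<le> 0})
    \<union> fst ` CG" (is "?L = ?R")
  proof
    show "?L \<subseteq> ?R"
    proof
      fix x assume "x \<in> ?L"
      then obtain z where x: "x \<in> X" and z: "z \<in> Zset Z0" and h: "(\<forall>z'\<in>Zset Z0. f1 x z' \<le> f1 x z) \<and> (\<forall>z'\<in>Zset Z0. f2 x z' \<le> f2 x z)"
        by blast
      show "x \<in> ?R"
      proof (cases z)
        case (Good c)
        then have "(x, c) \<in> CG" using x z h by (auto simp: CG_def Zset_simps)
        then show ?thesis by force
      qed (use x h in auto)
    qed
  next
    show "?R \<subseteq> ?L"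
    proof
      fix x assume "x \<in> ?R"
      then consider "x \<in> {x\<in>X. \<forall>z'\<in>Zset Z0. f1 x z' - f1 x NullD \<le> 0} \<inter> {x\<in>X. \<forall>z'\<in>Zset Z0. f2 x z' - f2 x NullD \<le> 0}"
        | "x \<in> {x\<in>X. \<forall>z'\<in>Zset Z0. f1 x z' - f1 x NullS \<le> 0} \<inter> {x\<in>X. \<forall>z'\<in>Zset Z0. f2 x z' - f2 x NullS \<le> 0}"
        | w where "w \<in> CG" "x = fst w" by blast
      then show "x \<in> ?L"
      proof cases
        case 1 then show ?thesis by (auto intro!: bexI[of _ NullD] simp: Zset_simps)
      next
        case 2 then show ?thesis by (auto intro!: bexI[of _ NullS] simp: Zset_simps)
      next
        case 3 then show ?thesis by (auto intro!: bexI[of _ "Good (snd w)"] simp: Zset_simps CG_def)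
      qed
    qed
  qed
  show ?thesis unfolding eq
    using c1 c2[of NullD] c2[of NullS] by (intro closed_Un closed_Int) (auto simp: Zset_simps)
qed


lemma gap_lemma:
  fixes X :: "'a::euclidean_space set" and Z0 :: "'c::euclidean_space set"
    and M :: "('a \<times> 'c ext) measure"
  assumes g: "good_fun X Z0 f" and X: "compact X" and Z: "compact Z0"
    and sM: "sets M = sets (borel \<Otimes>\<^sub>M Zmeas)" and dM: "distr M borel fst = \<mu>"
    and fin: "finite_measure \<mu>"
    and ae: "AE w in M. fst w \<in> X \<and> snd w \<in> Zset Z0"
  shows "integrable M (cut X Z0 f)"
    and "integral\<^sup>L M (\<lambda>w. Fmax X Z0 f (fst w) - cut X Z0 f w) = integral\<^sup>L \<mu> (Fmax X Z0 f) - integral\<^sup>L M (cut X Z0 f)"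
    and "integral\<^sup>L M (\<lambda>w. Fmax X Z0 f (fst w) - cut X Z0 f w) \<ge> 0"
    and "integral\<^sup>L M (\<lambda>w. Fmax X Z0 f (fst w) - cut X Z0 f w) = 0 \<longleftrightarrow>
           (AE w in M. \<forall>z'\<in>Zset Z0. f (fst w) z' \<le> f (fst w) (snd w))"
proof -
  obtain B where B: "\<forall>x\<in>X. \<forall>z\<in>Zset Z0. \<bar>f x z\<bar> \<le> B" using good_bounded[OF g X Z] by blast
  have meq: "measurable M N = measurable (borel \<Otimes>\<^sub>M Zmeas) N" for N :: "'d measure"
    using sM by (intro measurable_cong_sets) auto
  have mfst: "fst \<in> measurable M borel" unfolding meq by simp
  have spM: "space M = UNIV" using sets_eq_imp_space_eq[OF sM] by (simp add: space_pair_measure)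
  have spmu: "space \<mu> = UNIV" using dM[symmetric] by simp
  have "emeasure M (space M) = emeasure \<mu> (space \<mu>)"
    using emeasure_distr[OF mfst, of UNIV] dM spM spmu by simp
  then have finM: "finite_measure M" using fin
    by (intro finite_measureI) (simp add: finite_measure.emeasure_finite)
  have mcut: "cut X Z0 f \<in> borel_measurable M" unfolding meq
    using cut_measurable[OF g] X Z by (auto intro: compact_imp_closed)
  have mF: "Fmax X Z0 f \<in> borel_measurable borel" by (rule Fmax_measurable[OF g X Z])
  have mFM: "(\<lambda>w. Fmax X Z0 f (fst w)) \<in> borel_measurable M"
    using measurable_compose[OF mfst mF] by (simp add: comp_def)
  have bcut: "\<bar>cut X Z0 f w\<bar> \<le> \<bar>B\<bar>" for w
    using B by (auto simp: cut_def) (meson abs_ge_self order_trans)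
  show icut: "integrable M (cut X Z0 f)"
    using bcut by (intro finite_measure.integrable_const_bound[OF finM, of _ "\<bar>B\<bar>"] mcut) auto
  have iF: "integrable M (\<lambda>w. Fmax X Z0 f (fst w))"
    using Fmax_props(2)[OF B] by (intro finite_measure.integrable_const_bound[OF finM, of _ "\<bar>B\<bar>"] mFM) auto
  have intF: "integral\<^sup>L M (\<lambda>w. Fmax X Z0 f (fst w)) = integral\<^sup>L \<mu> (Fmax X Z0 f)"
    using integral_distr[OF mfst mF] dM by simp
  show "integral\<^sup>L M (\<lambda>w. Fmax X Z0 f (fst w) - cut X Z0 f w) = integral\<^sup>L \<mu> (Fmax X Z0 f) - integral\<^sup>L M (cut X Z0 f)"
    using Bochner_Integration.integral_diff[OF iF icut] intF by simp
  have nn: "AE w in M. 0 \<le> Fmax X Z0 f (fst w) - cut X Z0 f w"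
    using ae by eventually_elim (auto simp: cut_def Fmax_props(1)[OF B])
  show "integral\<^sup>L M (\<lambda>w. Fmax X Z0 f (fst w) - cut X Z0 f w) \<ge> 0"
    using nn by (rule integral_nonneg_AE)
  have "integral\<^sup>L M (\<lambda>w. Fmax X Z0 f (fst w) - cut X Z0 f w) = 0 \<longleftrightarrow>
       (AE w in M. Fmax X Z0 f (fst w) - cut X Z0 f w = 0)"
    by (intro integral_nonneg_eq_0_iff_AE nn Bochner_Integration.integrable_diff iF icut)
  also have "\<dots> \<longleftrightarrow> (AE w in M. \<forall>z'\<in>Zset Z0. f (fst w) z' \<le> f (fst w) (snd w))"
  proof -
    have eqv: "AE w in M. (Fmax X Z0 f (fst w) - cut X Z0 f w = 0) \<longleftrightarrow> (\<forall>z'\<in>Zset Z0. f (fst w) z' \<le> f (fst w) (snd w))"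
      using ae by eventually_elim (auto simp: cut_def Fmax_props(3)[OF B, symmetric])
    show ?thesis
    proof
      assume "AE w in M. Fmax X Z0 f (fst w) - cut X Z0 f w = 0"
      with eqv show "AE w in M. \<forall>z'\<in>Zset Z0. f (fst w) z' \<le> f (fst w) (snd w)" by eventually_elim auto
    next
      assume "AE w in M. \<forall>z'\<in>Zset Z0. f (fst w) z' \<le> f (fst w) (snd w)"
      with eqv show "AE w in M. Fmax X Z0 f (fst w) - cut X Z0 f w = 0" by eventually_elim auto
    qed
  qed
  finally show "integral\<^sup>L M (\<lambda>w. Fmax X Z0 f (fst w) - cut X Z0 f w) = 0 \<longleftrightarrow>
           (AE w in M. \<forall>z'\<in>Zset Z0. f (fst w) z' \<le> f (fst w) (snd w))" .
qed


lemma good_fun_price: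
  assumes "continuous_on Z0 (p \<circ> Good)"
  shows "good_fun X Z0 (\<lambda>x z. p z)"
proof -
  have "continuous_on (X \<times> Z0) (\<lambda>w. (p \<circ> Good) (snd w))"
    using assms by (intro continuous_on_compose2[OF assms, of _ snd]) (auto intro!: continuous_intros)
  then show ?thesis by (simp add: good_fun_def)
qed

lemma marginal_lemma:
  fixes X :: "'a::euclidean_space set" and Y :: "'b::euclidean_space set" and Z0 :: "'c::euclidean_space set"
    and \<alpha> :: "('a \<times> 'c ext) measure" and \<beta> :: "('b \<times> 'c ext) measure"
  assumes p: "continuous_on Z0 (p \<circ> Good)" "p NullD = 0" "p NullS = 0" and X: "closed X" and Y: "closed Y" and Z: "closed Z0"
    and sA: "sets \<alpha> = sets (borel \<Otimes>\<^sub>M Zmeas)" and aeA: "AE w in \<alpha>. fst w \<in> X \<and> snd w \<in> Zset Z0"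
    and sB: "sets \<beta> = sets (borel \<Otimes>\<^sub>M Zmeas)" and aeB: "AE w in \<beta>. fst w \<in> Y \<and> snd w \<in> Zset Z0"
    and eq: "\<forall>B \<in> sets borel. B \<subseteq> Z0 \<longrightarrow> emeasure \<alpha> (UNIV \<times> Good ` B) = emeasure \<beta> (UNIV \<times> Good ` B)"
  shows "integral\<^sup>L \<alpha> (cut X Z0 (\<lambda>x z. p z)) = integral\<^sup>L \<beta> (cut Y Z0 (\<lambda>y z. p z))"
proof -
  define G where "G = Good ` Z0"
  define q where "q = (\<lambda>z. if z \<in> G then p z else 0)"
  have GZ: "Good -` G = Z0" by (auto simp: G_def)
  have Gs: "G \<in> sets Zmeas" using Z GZ by (intro Zmeas_setsI) (simp add: borel_closed)
  have qm: "q \<in> borel_measurable Zmeas"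
  proof (rule Zmeas_measurableI)
    have "(\<lambda>c. indicator Z0 c *\<^sub>R (p \<circ> Good) c) \<in> borel_measurable borel"
      using p Z by (intro borel_measurable_continuous_on_indicator) (auto simp: borel_closed)
    moreover have "(\<lambda>c. q (Good c)) = (\<lambda>c. indicator Z0 c *\<^sub>R (p \<circ> Good) c)"
      by (rule ext) (auto simp: q_def G_def indicator_def image_iff)
    ultimately show "(\<lambda>c. q (Good c)) \<in> borel_measurable borel" by simp
  qed
  have cutq: "AE w in M. cut S Z0 (\<lambda>x z. p z) w = q (snd w)" if "AE w in M. fst w \<in> S \<and> snd w \<in> Zset Z0" for M :: "('d \<times> 'c ext) measure" and S
    using that by eventually_elim (auto simp: cut_def q_def G_def Zset_def p)

  have step: "integral\<^sup>L M (cut S Z0 (\<lambda>x z. p z)) = integral\<^sup>L (density (distr M Zmeas snd) (indicator G)) q"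
    if sM: "sets M = sets ((borel :: 'e measure) \<Otimes>\<^sub>M Zmeas)" and aeM: "AE w in M. fst w \<in> S \<and> snd w \<in> Zset Z0" and S: "closed S"
    for M :: "('e::euclidean_space \<times> 'c ext) measure" and S
  proof -
    have meq: "measurable M N = measurable (borel \<Otimes>\<^sub>M Zmeas) N" for N :: "'h measure"
      using sM by (intro measurable_cong_sets) auto
    have msnd: "snd \<in> measurable M Zmeas" unfolding meq by simp
    have mc: "cut S Z0 (\<lambda>x z. p z) \<in> borel_measurable M" unfolding meq
      using cut_measurable[OF good_fun_price[OF p(1)] S Z] .
    have mq2: "(\<lambda>w. q (snd w)) \<in> borel_measurable M"
      using measurable_compose[OF msnd qm] by (simp add: comp_def)
    have "integral\<^sup>L M (cut S Z0 (\<lambda>x z. p z)) = integral\<^sup>L M (\<lambda>w. q (snd w))"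
      by (rule integral_cong_AE[OF mc mq2 cutq[OF aeM]])
    also have "\<dots> = integral\<^sup>L (distr M Zmeas snd) q"
      by (rule integral_distr[OF msnd qm, symmetric])
    also have "\<dots> = integral\<^sup>L (distr M Zmeas snd) (\<lambda>z. indicator G z *\<^sub>R q z)"
      by (rule Bochner_Integration.integral_cong) (auto simp: q_def indicator_def)
    also have "\<dots> = integral\<^sup>L (density (distr M Zmeas snd) (\<lambda>z. ennreal (indicator G z))) q"
      using Gs qm by (intro integral_density[symmetric]) auto
    finally show ?thesis by (simp add: ennreal_indicator)
  qed
  have dens_eq: "density (distr \<alpha> Zmeas snd) (indicator G) = density (distr \<beta> Zmeas snd) (indicator G)"
  proof (rule measure_eqI)
    show "sets (density (distr \<alpha> Zmeas snd) (indicator G)) = sets (density (distr \<beta> Zmeas snd) (indicator G))"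
      by simp
  next
    fix S assume "S \<in> sets (density (distr \<alpha> Zmeas snd) (indicator G))"
    then have S: "S \<in> sets Zmeas" by simp
    have key: "emeasure (density (distr M Zmeas snd) (indicator G)) S = emeasure M (UNIV \<times> Good ` (Good -` S \<inter> Z0))"
      if sM: "sets M = sets ((borel :: 'f measure) \<Otimes>\<^sub>M Zmeas)" for M :: "('f::euclidean_space \<times> 'c ext) measure"
    proof -
      have meq: "measurable M N = measurable (borel \<Otimes>\<^sub>M Zmeas) N" for N :: "'g measure"
        using sM by (intro measurable_cong_sets) auto
      have msnd: "snd \<in> measurable M Zmeas" unfolding meq by simp
      have spM: "space M = UNIV" using sets_eq_imp_space_eq[OF sM] by (simp add: space_pair_measure)
      have "emeasure (density (distr M Zmeas snd) (indicator G)) S = (\<integral>\<^sup>+ z. indicator G z * indicator S z \<partial>distr M Zmeas snd)"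
        using S Gs by (intro emeasure_density) auto
      also have "\<dots> = (\<integral>\<^sup>+ z. indicator (G \<inter> S) z \<partial>distr M Zmeas snd)"
        by (intro nn_integral_cong) (auto simp: indicator_def)
      also have "\<dots> = emeasure (distr M Zmeas snd) (G \<inter> S)"
        using S Gs by (intro nn_integral_indicator) auto
      also have "\<dots> = emeasure M (snd -` (G \<inter> S) \<inter> space M)"
        using S Gs by (intro emeasure_distr msnd) auto
      also have "snd -` (G \<inter> S) \<inter> space M = UNIV \<times> Good ` (Good -` S \<inter> Z0)"
        by (auto simp: spM G_def)
      finally show ?thesis .
    qed
    have "Good -` S \<inter> Z0 \<in> sets borel"
      using measurable_sets[OF Good_measurable S] Z by (auto simp: borel_closed)
    moreover have "Good -` S \<inter> Z0 \<subseteq> Z0" by auto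
    ultimately show "emeasure (density (distr \<alpha> Zmeas snd) (indicator G)) S = emeasure (density (distr \<beta> Zmeas snd) (indicator G)) S"
      using key[OF sA] key[OF sB] eq by simp
  qed
  show ?thesis using step[OF sA aeA X] step[OF sB aeB Y] dens_eq by simp
qed


lemma good_fun_uZ:
  assumes "regular_util X Z0 u"
  shows "good_fun X Z0 (uZ u)"
proof -
  obtain U where U: "X \<times> Z0 \<subseteq> U" "continuous_on U (\<lambda>(x,z). u x z)"
    using assms unfolding regular_util_def by blast
  have "continuous_on (X \<times> Z0) (\<lambda>(x,z). u x z)" using U continuous_on_subset by blast
  moreover have "(\<lambda>w. uZ u (fst w) (Good (snd w))) = (\<lambda>(x,z). u x z)" by (auto simp: uZ_def)
  ultimately show ?thesis by (simp add: good_fun_def uZ_def split_beta')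
qed

lemma good_fun_vZ:
  assumes "regular_util Y Z0 v"
  shows "good_fun Y Z0 (vZ v)"
proof -
  obtain U where U: "Y \<times> Z0 \<subseteq> U" "continuous_on U (\<lambda>(x,z). v x z)"
    using assms unfolding regular_util_def by blast
  have "continuous_on (Y \<times> Z0) (\<lambda>(x,z). v x z)" using U continuous_on_subset by blast
  moreover have "(\<lambda>w. vZ v (fst w) (Good (snd w))) = (\<lambda>(x,z). v x z)" by (auto simp: vZ_def)
  ultimately show ?thesis by (simp add: good_fun_def vZ_def split_beta')
qed

lemma demand_map_iff: "z \<in> demand_map Z0 u p x \<longleftrightarrow> z \<in> Zset Z0 \<and> (\<forall>z'\<in>Zset Z0. uZ u x z' - p z' \<le> uZ u x z - p z)"
  by (simp add: demand_map_def)

lemma supply_map_iff: "z \<in> supply_map Z0 v p y \<longleftrightarrow> z \<in> Zset Z0 \<and> (\<forall>z'\<in>Zset Z0. p z' - vZ v y z' \<le> p z - vZ v y z)"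
  by (auto simp: supply_map_def)


theorem mainTheorem4:
  fixes X :: "'a::euclidean_space set" and Y :: "'b::euclidean_space set"
    and Z0 :: "'c::euclidean_space set"
    and \<mu> :: "'a measure" and \<nu> :: "'b measure"
    and u :: "'a \<Rightarrow> 'c \<Rightarrow> real" and v :: "'b \<Rightarrow> 'c \<Rightarrow> real"
    and p1 p2 :: "'c ext \<Rightarrow> real"
    and \<alpha>1 \<alpha>2 :: "('a \<times> 'c ext) measure" and \<beta>1 \<beta>2 :: "('b \<times> 'c ext) measure"
  assumes "compact X" "compact Y" "compact Z0" "X \<noteq> {}" "Y \<noteq> {}"
    and "sets \<mu> = sets borel" "finite_measure \<mu>" "emeasure \<mu> (- X) = 0"
    and "sets \<nu> = sets borel" "finite_measure \<nu>" "emeasure \<nu> (- Y) = 0"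
    and "regular_util X Z0 u" "regular_util Y Z0 v"
    and "equilibrium X Y Z0 \<mu> \<nu> u v p1 \<alpha>1 \<beta>1"
    and "equilibrium X Y Z0 \<mu> \<nu> u v p2 \<alpha>2 \<beta>2"
  shows "AE x in \<mu>. \<forall>d1. demand_map Z0 u p1 x = {d1} \<longrightarrow>
           (d1 \<in> demand_map Z0 u p2 x \<and> (\<forall>d2. demand_map Z0 u p2 x = {d2} \<longrightarrow> d1 = d2))"
proof -
  note X = assms(1) and Y = assms(2) and Z = assms(3)
  have cX: "closed X" "closed Y" "closed Z0" using X Y Z by (auto intro: compact_imp_closed)
  have gu: "good_fun X Z0 (uZ u)" by (rule good_fun_uZ[OF assms(12)])
  have gv: "good_fun Y Z0 (vZ v)" by (rule good_fun_vZ[OF assms(13)])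
  have eq1: "admissible X Y Z0 u v p1" "demand_dist X Z0 \<mu> u p1 \<alpha>1" "supply_dist Y Z0 \<nu> v p1 \<beta>1"
    "\<forall>B \<in> sets borel. B \<subseteq> Z0 \<longrightarrow> emeasure \<alpha>1 (UNIV \<times> Good ` B) = emeasure \<beta>1 (UNIV \<times> Good ` B)"
    using assms(14) unfolding equilibrium_def by auto
  have eq2: "admissible X Y Z0 u v p2" "demand_dist X Z0 \<mu> u p2 \<alpha>2" "supply_dist Y Z0 \<nu> v p2 \<beta>2"
    "\<forall>B \<in> sets borel. B \<subseteq> Z0 \<longrightarrow> emeasure \<alpha>2 (UNIV \<times> Good ` B) = emeasure \<beta>2 (UNIV \<times> Good ` B)"
    using assms(15) unfolding equilibrium_def by auto
  have pr1: "continuous_on Z0 (p1 \<circ> Good)" "p1 NullD = 0" "p1 NullS = 0"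
    using eq1(1) by (auto simp: admissible_def price_system_def)
  have pr2: "continuous_on Z0 (p2 \<circ> Good)" "p2 NullD = 0" "p2 NullS = 0"
    using eq2(1) by (auto simp: admissible_def price_system_def)
  have gp1X: "good_fun X Z0 (\<lambda>x z. p1 z)" "good_fun Y Z0 (\<lambda>x z. p1 z)" using good_fun_price[OF pr1(1)] by auto
  have gp2X: "good_fun X Z0 (\<lambda>x z. p2 z)" "good_fun Y Z0 (\<lambda>x z. p2 z)" using good_fun_price[OF pr2(1)] by auto
  define fd1 where "fd1 = (\<lambda>x z. uZ u x z - p1 z)"
  define fd2 where "fd2 = (\<lambda>x z. uZ u x z - p2 z)"
  define fs1 where "fs1 = (\<lambda>y z. p1 z - vZ v y z)"
  define fs2 where "fs2 = (\<lambda>y z. p2 z - vZ v y z)"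
  have gfd1: "good_fun X Z0 fd1" unfolding fd1_def by (intro good_fun_diff gu gp1X)
  have gfd2: "good_fun X Z0 fd2" unfolding fd2_def by (intro good_fun_diff gu gp2X)
  have gfs1: "good_fun Y Z0 fs1" unfolding fs1_def by (intro good_fun_diff gv gp1X)
  have gfs2: "good_fun Y Z0 fs2" unfolding fs2_def by (intro good_fun_diff gv gp2X)
  have sA1: "sets \<alpha>1 = sets (borel \<Otimes>\<^sub>M Zmeas)" and dA1: "distr \<alpha>1 borel fst = \<mu>"
    and cA1: "AE w in \<alpha>1. fst w \<in> X \<and> snd w \<in> demand_map Z0 u p1 (fst w)"
    using eq1(2) by (auto simp: demand_dist_def)
  have sA2: "sets \<alpha>2 = sets (borel \<Otimes>\<^sub>M Zmeas)" and dA2: "distr \<alpha>2 borel fst = \<mu>"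
    and cA2: "AE w in \<alpha>2. fst w \<in> X \<and> snd w \<in> demand_map Z0 u p2 (fst w)"
    using eq2(2) by (auto simp: demand_dist_def)
  have sB1: "sets \<beta>1 = sets (borel \<Otimes>\<^sub>M Zmeas)" and dB1: "distr \<beta>1 borel fst = \<nu>"
    and cB1: "AE w in \<beta>1. fst w \<in> Y \<and> snd w \<in> supply_map Z0 v p1 (fst w)"
    using eq1(3) by (auto simp: supply_dist_def)
  have sB2: "sets \<beta>2 = sets (borel \<Otimes>\<^sub>M Zmeas)" and dB2: "distr \<beta>2 borel fst = \<nu>"
    and cB2: "AE w in \<beta>2. fst w \<in> Y \<and> snd w \<in> supply_map Z0 v p2 (fst w)"
    using eq2(3) by (auto simp: supply_dist_def)
  have aA1: "AE w in \<alpha>1. fst w \<in> X \<and> snd w \<in> Zset Z0" using cA1 by eventually_elim (auto simp: demand_map_iff)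
  have aA2: "AE w in \<alpha>2. fst w \<in> X \<and> snd w \<in> Zset Z0" using cA2 by eventually_elim (auto simp: demand_map_iff)
  have aB1: "AE w in \<beta>1. fst w \<in> Y \<and> snd w \<in> Zset Z0" using cB1 by eventually_elim (auto simp: supply_map_iff)
  have aB2: "AE w in \<beta>2. fst w \<in> Y \<and> snd w \<in> Zset Z0" using cB2 by eventually_elim (auto simp: supply_map_iff)
  note fin = assms(7) assms(10)
  note Gd11 = gap_lemma[OF gfd1 X Z sA1 dA1 fin(1) aA1]
  note Gd12 = gap_lemma[OF gfd1 X Z sA2 dA2 fin(1) aA2]
  note Gd21 = gap_lemma[OF gfd2 X Z sA1 dA1 fin(1) aA1]
  note Gd22 = gap_lemma[OF gfd2 X Z sA2 dA2 fin(1) aA2]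
  note Gs11 = gap_lemma[OF gfs1 Y Z sB1 dB1 fin(2) aB1]
  note Gs12 = gap_lemma[OF gfs1 Y Z sB2 dB2 fin(2) aB2]
  note Gs21 = gap_lemma[OF gfs2 Y Z sB1 dB1 fin(2) aB1]
  note Gs22 = gap_lemma[OF gfs2 Y Z sB2 dB2 fin(2) aB2]
  note Iu1 = gap_lemma(1)[OF gu X Z sA1 dA1 fin(1) aA1]
  note Iu2 = gap_lemma(1)[OF gu X Z sA2 dA2 fin(1) aA2]
  note Iv1 = gap_lemma(1)[OF gv Y Z sB1 dB1 fin(2) aB1]
  note Iv2 = gap_lemma(1)[OF gv Y Z sB2 dB2 fin(2) aB2]
  note Ipa11 = gap_lemma(1)[OF gp1X(1) X Z sA1 dA1 fin(1) aA1]
  note Ipa12 = gap_lemma(1)[OF gp1X(1) X Z sA2 dA2 fin(1) aA2]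
  note Ipa21 = gap_lemma(1)[OF gp2X(1) X Z sA1 dA1 fin(1) aA1]
  note Ipa22 = gap_lemma(1)[OF gp2X(1) X Z sA2 dA2 fin(1) aA2]
  note Ipb11 = gap_lemma(1)[OF gp1X(2) Y Z sB1 dB1 fin(2) aB1]
  note Ipb12 = gap_lemma(1)[OF gp1X(2) Y Z sB2 dB2 fin(2) aB2]
  note Ipb21 = gap_lemma(1)[OF gp2X(2) Y Z sB1 dB1 fin(2) aB1]
  note Ipb22 = gap_lemma(1)[OF gp2X(2) Y Z sB2 dB2 fin(2) aB2]
  have cutd: "integral\<^sup>L M (cut X Z0 (\<lambda>x z. uZ u x z - p z)) = integral\<^sup>L M (cut X Z0 (uZ u)) - integral\<^sup>L M (cut X Z0 (\<lambda>x z. p z))"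
    if "integrable M (cut X Z0 (uZ u))" "integrable M (cut X Z0 (\<lambda>x z. p z))" for M p
  proof -
    have "cut X Z0 (\<lambda>x z. uZ u x z - p z) = (\<lambda>w. cut X Z0 (uZ u) w - cut X Z0 (\<lambda>x z. p z) w)"
      by (rule ext, rule cut_diff)
    then show ?thesis using Bochner_Integration.integral_diff[OF that] by simp
  qed
  have cuts: "integral\<^sup>L M (cut Y Z0 (\<lambda>y z. p z - vZ v y z)) = integral\<^sup>L M (cut Y Z0 (\<lambda>y z. p z)) - integral\<^sup>L M (cut Y Z0 (vZ v))"
    if "integrable M (cut Y Z0 (vZ v))" "integrable M (cut Y Z0 (\<lambda>y z. p z))" for M p
  proof -
    have "cut Y Z0 (\<lambda>y z. p z - vZ v y z) = (\<lambda>w. cut Y Z0 (\<lambda>y z. p z) w - cut Y Z0 (vZ v) w)"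
      by (rule ext, rule cut_diff)
    then show ?thesis using Bochner_Integration.integral_diff[OF that(2,1)] by simp
  qed
  have m11: "integral\<^sup>L \<alpha>1 (cut X Z0 (\<lambda>x z. p1 z)) = integral\<^sup>L \<beta>1 (cut Y Z0 (\<lambda>y z. p1 z))"
    by (rule marginal_lemma[OF pr1 cX sA1 aA1 sB1 aB1 eq1(4)])
  have m12: "integral\<^sup>L \<alpha>2 (cut X Z0 (\<lambda>x z. p1 z)) = integral\<^sup>L \<beta>2 (cut Y Z0 (\<lambda>y z. p1 z))"
    by (rule marginal_lemma[OF pr1 cX sA2 aA2 sB2 aB2 eq2(4)])
  have m21: "integral\<^sup>L \<alpha>1 (cut X Z0 (\<lambda>x z. p2 z)) = integral\<^sup>L \<beta>1 (cut Y Z0 (\<lambda>y z. p2 z))"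
    by (rule marginal_lemma[OF pr2 cX sA1 aA1 sB1 aB1 eq1(4)])
  have m22: "integral\<^sup>L \<alpha>2 (cut X Z0 (\<lambda>x z. p2 z)) = integral\<^sup>L \<beta>2 (cut Y Z0 (\<lambda>y z. p2 z))"
    by (rule marginal_lemma[OF pr2 cX sA2 aA2 sB2 aB2 eq2(4)])
  have z11: "integral\<^sup>L \<alpha>1 (\<lambda>w. Fmax X Z0 fd1 (fst w) - cut X Z0 fd1 w) = 0"
    unfolding Gd11(4) using cA1 by eventually_elim (auto simp: demand_map_iff fd1_def)
  have z22: "integral\<^sup>L \<alpha>2 (\<lambda>w. Fmax X Z0 fd2 (fst w) - cut X Z0 fd2 w) = 0"
    unfolding Gd22(4) using cA2 by eventually_elim (auto simp: demand_map_iff fd2_def)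
  have y11: "integral\<^sup>L \<beta>1 (\<lambda>w. Fmax Y Z0 fs1 (fst w) - cut Y Z0 fs1 w) = 0"
    unfolding Gs11(4) using cB1 by eventually_elim (auto simp: supply_map_iff fs1_def)
  have y22: "integral\<^sup>L \<beta>2 (\<lambda>w. Fmax Y Z0 fs2 (fst w) - cut Y Z0 fs2 w) = 0"
    unfolding Gs22(4) using cB2 by eventually_elim (auto simp: supply_map_iff fs2_def)
  define gd12 where "gd12 = integral\<^sup>L \<alpha>2 (\<lambda>w. Fmax X Z0 fd1 (fst w) - cut X Z0 fd1 w)"
  define gs12 where "gs12 = integral\<^sup>L \<beta>2 (\<lambda>w. Fmax Y Z0 fs1 (fst w) - cut Y Z0 fs1 w)"
  define gd21 where "gd21 = integral\<^sup>L \<alpha>1 (\<lambda>w. Fmax X Z0 fd2 (fst w) - cut X Z0 fd2 w)"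
  define gs21 where "gs21 = integral\<^sup>L \<beta>1 (\<lambda>w. Fmax Y Z0 fs2 (fst w) - cut Y Z0 fs2 w)"
  define Kd1 where "Kd1 = integral\<^sup>L \<mu> (Fmax X Z0 fd1)"
  define Kd2 where "Kd2 = integral\<^sup>L \<mu> (Fmax X Z0 fd2)"
  define Ks1 where "Ks1 = integral\<^sup>L \<nu> (Fmax Y Z0 fs1)"
  define Ks2 where "Ks2 = integral\<^sup>L \<nu> (Fmax Y Z0 fs2)"
  define Wu1 where "Wu1 = integral\<^sup>L \<alpha>1 (cut X Z0 (uZ u))"
  define Wu2 where "Wu2 = integral\<^sup>L \<alpha>2 (cut X Z0 (uZ u))"
  define Wv1 where "Wv1 = integral\<^sup>L \<beta>1 (cut Y Z0 (vZ v))"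
  define Wv2 where "Wv2 = integral\<^sup>L \<beta>2 (cut Y Z0 (vZ v))"
  define P11 where "P11 = integral\<^sup>L \<alpha>1 (cut X Z0 (\<lambda>x z. p1 z))"
  define P12 where "P12 = integral\<^sup>L \<alpha>2 (cut X Z0 (\<lambda>x z. p1 z))"
  define P21 where "P21 = integral\<^sup>L \<alpha>1 (cut X Z0 (\<lambda>x z. p2 z))"
  define P22 where "P22 = integral\<^sup>L \<alpha>2 (cut X Z0 (\<lambda>x z. p2 z))"
  have e11d: "Kd1 - Wu1 + P11 = 0" using Gd11(2) z11 cutd[OF Iu1 Ipa11]
    unfolding Kd1_def Wu1_def P11_def fd1_def by simp
  have e22d: "Kd2 - Wu2 + P22 = 0" using Gd22(2) z22 cutd[OF Iu2 Ipa22]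
    unfolding Kd2_def Wu2_def P22_def fd2_def by simp
  have e11s: "Ks1 - P11 + Wv1 = 0" using Gs11(2) y11 cuts[OF Iv1 Ipb11] m11
    unfolding Ks1_def Wv1_def P11_def fs1_def by simp
  have e22s: "Ks2 - P22 + Wv2 = 0" using Gs22(2) y22 cuts[OF Iv2 Ipb22] m22
    unfolding Ks2_def Wv2_def P22_def fs2_def by simp
  have e12d: "gd12 = Kd1 - Wu2 + P12" using Gd12(2) cutd[OF Iu2 Ipa12]
    unfolding gd12_def Kd1_def Wu2_def P12_def fd1_def by simp
  have e12s: "gs12 = Ks1 - P12 + Wv2" using Gs12(2) cuts[OF Iv2 Ipb12] m12
    unfolding gs12_def Ks1_def Wv2_def P12_def fs1_def by simp
  have e21d: "gd21 = Kd2 - Wu1 + P21" using Gd21(2) cutd[OF Iu1 Ipa21]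
    unfolding gd21_def Kd2_def Wu1_def P21_def fd2_def by simp
  have e21s: "gs21 = Ks2 - P21 + Wv1" using Gs21(2) cuts[OF Iv1 Ipb21] m21
    unfolding gs21_def Ks2_def Wv1_def P21_def fs2_def by simp
  have n: "gd12 \<ge> 0" "gs12 \<ge> 0" "gd21 \<ge> 0" "gs21 \<ge> 0"
    using Gd12(3) Gs12(3) Gd21(3) Gs21(3) unfolding gd12_def gs12_def gd21_def gs21_def by auto
  have "gd12 = 0" using e11d e22d e11s e22s e12d e12s e21d e21s n by linarith
  then have key: "integral\<^sup>L \<alpha>2 (\<lambda>w. Fmax X Z0 fd1 (fst w) - cut X Z0 fd1 w) = 0"
    unfolding gd12_def .
  have c12: "AE w in \<alpha>2. \<forall>z'\<in>Zset Z0. fd1 (fst w) z' \<le> fd1 (fst w) (snd w)"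
    using key Gd12(4) by simp
  define E where "E = {x\<in>X. \<exists>z\<in>Zset Z0. (\<forall>z'\<in>Zset Z0. fd1 x z' \<le> fd1 x z) \<and> (\<forall>z'\<in>Zset Z0. fd2 x z' \<le> fd2 x z)}"
  have Ec: "closed E" unfolding E_def by (rule E_closed[OF gfd1 gfd2 X Z])
  have aeE: "AE w in \<alpha>2. fst w \<in> E"
    using c12 cA2 by eventually_elim (auto simp: E_def demand_map_iff fd2_def)
  have mfst2: "fst \<in> measurable \<alpha>2 borel"
    using sA2 by (subst measurable_cong_sets[of _ "borel \<Otimes>\<^sub>M Zmeas" borel borel]) auto
  have Es: "- E \<in> sets borel" using Ec by (simp add: borel_open open_Compl)
  have N2: "fst -` (- E) \<inter> space \<alpha>2 \<in> sets \<alpha>2" using measurable_sets[OF mfst2 Es] .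
  have "emeasure \<alpha>2 (fst -` (- E) \<inter> space \<alpha>2) = 0"
    using aeE AE_iff_measurable[OF N2, of "\<lambda>w. fst w \<in> E"] by auto
  moreover have "emeasure \<mu> (- E) = emeasure \<alpha>2 (fst -` (- E) \<inter> space \<alpha>2)"
    using emeasure_distr[OF mfst2 Es] dA2 by simp
  ultimately have muE: "emeasure \<mu> (- E) = 0" by simp
  have spmu: "space \<mu> = UNIV" using dA2[symmetric] by simp
  have Emu: "- E \<in> sets \<mu>" using Es assms(6) by simp
  have "AE x in \<mu>. x \<in> E"
    using AE_iff_measurable[OF Emu, of "\<lambda>x. x \<in> E"] muE spmu by auto
  then show ?thesis
  proof eventually_elim
    case (elim x)
    then obtain z where z: "z \<in> demand_map Z0 u p1 x" "z \<in> demand_map Z0 u p2 x"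
      by (auto simp: E_def demand_map_iff fd1_def fd2_def)
    show ?case
    proof (intro allI impI)
      fix d1 assume "demand_map Z0 u p1 x = {d1}"
      then have "d1 \<in> demand_map Z0 u p2 x" using z by auto
      then show "d1 \<in> demand_map Z0 u p2 x \<and> (\<forall>d2. demand_map Z0 u p2 x = {d2} \<longrightarrow> d1 = d2)" by auto
    qed
  qed
qed

end
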